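(* Let $\Omega\subset\mathbb R^d$ be bounded, $X=H=L^2(\Omega)$, $T=\mathrm{Id}$, and $J=S|_{L^2(\Omega)}$ the negative Boltzmann–Shannon entropy restricted to $L^2(\Omega)$. Let $(\lambda_n)_{n\ge0}$ be an increasing sequence of positive numbers and let $x^\dagger\in L^2(\Omega)$ satisfy $0\le x^\dagger(t)<1/e$ for all $t$ in a set $E\subset\Omega$ of positive measure. Let $x_n$ be the MHDM iterates with data $f=x^\dagger$ and penalty $S$. Then for almost every $t\in E$ and all $n\in\mathbb N$, $$x_n(t)>x_{n-1}(t)>\dots>x_0(t)>x^\dagger(t).$$
   Context: $S(x)=\int_\Omega x\log x\,dt$ if $x\ge0$ a.e. and $x\log x\in L^1(\Omega)$, $S(x)=\infty$ otherwise ($0\log0=0$). MHDM with $T=\mathrm{Id}$: $u_0=\arg\min_u\frac{\lambda_0}{2}\|u-x^\dagger\|_{L^2}^2+S(u)$, $x_0=u_0$; for $n\ge1$, $u_n=\arg\min_u\frac{\lambda_n}{2}\|x^\dagger-x_{n-1}-u\|_{L^2}^2+S(u)$, $x_n=x_{n-1}+u_n$ (the minimizers are unique). *)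

theory Defs
  imports "HOL-Analysis.Analysis"
begin

definition L2 :: "'a measure \<Rightarrow> ('a \<Rightarrow> real) set" where
  "L2 M = {u. u \<in> borel_measurable M \<and> integrable M (\<lambda>t. (u t)\<^sup>2)}"

text \<open>Negative Boltzmann--Shannon entropy S (with 0 log 0 = 0), value in extended reals.\<close>
definition entropyS :: "'a measure \<Rightarrow> ('a \<Rightarrow> real) \<Rightarrow> ereal" where
  "entropyS M u =
     (if (AE t in M. 0 \<le> u t) \<and> integrable M (\<lambda>t. u t * ln (u t))
      then ereal (\<integral>t. u t * ln (u t) \<partial>M) else \<infinity>)"

definition is_minimizer_L2 :: "'a measure \<Rightarrow> (('a \<Rightarrow> real) \<Rightarrow> ereal) \<Rightarrow> ('a \<Rightarrow> real) \<Rightarrow> bool" where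
  "is_minimizer_L2 M F u \<longleftrightarrow> u \<in> L2 M \<and> (\<forall>v\<in>L2 M. F u \<le> F v)"

definition MHDM_iterates ::
  "'a measure \<Rightarrow> (nat \<Rightarrow> real) \<Rightarrow> ('a \<Rightarrow> real) \<Rightarrow> (nat \<Rightarrow> 'a \<Rightarrow> real) \<Rightarrow> bool" where
  "MHDM_iterates M lam f x \<longleftrightarrow>
     is_minimizer_L2 M
       (\<lambda>u. ereal (lam 0 / 2 * (\<integral>t. (u t - f t)\<^sup>2 \<partial>M)) + entropyS M u) (x 0)
   \<and> (\<forall>n. is_minimizer_L2 M
       (\<lambda>u. ereal (lam (Suc n) / 2 * (\<integral>t. (f t - x n t - u t)\<^sup>2 \<partial>M)) + entropyS M u)
       (\<lambda>t. x (Suc n) t - x n t))"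

end

theory Submission
  imports Defs
begin


lemma sq_diff_le: "(a - b)^2 \<le> 2*a^2 + 2*(b::real)^2"
proof -
  have "0 \<le> (a+b)^2" by simp
  thus ?thesis by (simp add: power2_eq_square algebra_simps)
qed

lemma sq_add_le: "(a + b)^2 \<le> 2*a^2 + 2*(b::real)^2"
  using sq_diff_le[of a "-b"] by simp

lemma L2_sq_diff:
  assumes "f \<in> L2 M" "g \<in> L2 M"
  shows "integrable M (\<lambda>t. (f t - g t)^2)"
proof -
  have i: "integrable M (\<lambda>t. 2*(f t)^2 + 2*(g t)^2)" using assms unfolding L2_def by auto
  have m: "(\<lambda>t. (f t - g t)^2) \<in> borel_measurable M" using assms unfolding L2_def by auto
  have "AE x in M. norm ((f x - g x)^2) \<le> norm (2*(f x)^2 + 2*(g x)^2)"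
    using sq_diff_le by auto
  from Bochner_Integration.integrable_bound[OF i m this] show ?thesis .
qed

lemma L2_add: assumes "f \<in> L2 M" "g \<in> L2 M" shows "(\<lambda>t. f t + g t) \<in> L2 M"
proof -
  have "integrable M (\<lambda>t. (f t + g t)^2)"
  proof -
    have i: "integrable M (\<lambda>t. 2*(f t)^2 + 2*(g t)^2)" using assms unfolding L2_def by auto
    have m: "(\<lambda>t. (f t + g t)^2) \<in> borel_measurable M" using assms unfolding L2_def by auto
    have "AE x in M. norm ((f x + g x)^2) \<le> norm (2*(f x)^2 + 2*(g x)^2)"
      using sq_add_le by auto
    from Bochner_Integration.integrable_bound[OF i m this] show ?thesis .
  qed
  thus ?thesis using assms unfolding L2_def by auto
qed

lemma L2_diff: assumes "f \<in> L2 M" "g \<in> L2 M" shows "(\<lambda>t. f t - g t) \<in> L2 M"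
  using L2_sq_diff[OF assms] assms unfolding L2_def by auto

lemma ind_int:
  fixes h :: "'a \<Rightarrow> real"
  assumes "finite_measure M" "A \<in> sets M" "h \<in> borel_measurable M" "\<And>t. t \<in> A \<Longrightarrow> \<bar>h t\<bar> \<le> C"
  shows "integrable M (\<lambda>t. indicator A t * h t)"
proof -
  have a: "AE x in M. norm (indicator A x * h x) \<le> \<bar>C\<bar>"
    using assms(4) by (auto simp: indicator_def intro: order_trans[OF _ abs_ge_self])
  have m: "(\<lambda>t. indicator A t * h t) \<in> borel_measurable M" using assms by measurable
  from finite_measure.integrable_const_bound[OF assms(1) a m] show ?thesis .
qed

lemma xlnx_bound: assumes "0 \<le> (s::real)" shows "\<bar>s * ln s\<bar> \<le> s^2 + 1"
proof (cases "s = 0")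
  case False
  hence s: "0 < s" using assms by auto
  have a: "ln s \<le> s - 1" using ln_le_minus_one[OF s] .
  have b: "1 - 1/s \<le> ln s"
  proof -
    have "ln (1/s) \<le> 1/s - 1" using ln_le_minus_one s by auto
    thus ?thesis using s by (simp add: ln_div)
  qed
  show ?thesis
  proof (cases "s \<ge> 1")
    case True
    hence "0 \<le> ln s" by simp
    hence "\<bar>s * ln s\<bar> = s * ln s" using s by simp
    also have "\<dots> \<le> s * (s - 1)" using a s by (simp add: mult_left_mono)
    finally have "\<bar>s * ln s\<bar> \<le> s * s - s" by (simp add: algebra_simps)
    thus ?thesis using s by (simp add: power2_eq_square)
  next
    case False
    hence "ln s \<le> 0" using s by simp
    hence "\<bar>s * ln s\<bar> = s * (- ln s)" using s by (simp add: abs_if mult_less_0_iff)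
    also have "\<dots> \<le> s * (1/s - 1)" using b s by (intro mult_left_mono) auto
    also have "\<dots> = 1 - s" using s by (simp add: field_simps)
    finally have "\<bar>s * ln s\<bar> \<le> 1 - s" .
    moreover have "0 \<le> s * s" using s by simp
    ultimately show ?thesis using s unfolding power2_eq_square by linarith
  qed
qed simp

lemma sq_le: "\<bar>a::real\<bar> \<le> c \<Longrightarrow> a^2 \<le> c^2"
  by (metis abs_ge_zero power2_abs power_mono)

lemma perturb:
  fixes M :: "'a measure" and g u :: "'a \<Rightarrow> real"
  assumes fin: "finite_measure M" and lam: "0 < lam" and g: "g \<in> L2 M"
  and min: "is_minimizer_L2 M (\<lambda>v. ereal (lam/2 * (\<integral>t. (g t - v t)^2 \<partial>M)) + entropyS M v) u"
  and A: "A \<in> sets M" and eps: "0 < \<epsilon>"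
  and bnd: "\<And>t. t\<in>A \<Longrightarrow> 0 \<le> u t \<and> u t \<le> K \<and> \<bar>g t\<bar> \<le> K"
  and neg: "\<And>t. t\<in>A \<Longrightarrow> lam/2*(g t - (u t + \<epsilon>))^2 + (u t+\<epsilon>)*ln(u t+\<epsilon>) < lam/2*(g t - u t)^2 + u t * ln(u t)"
  shows "emeasure M A = 0"
proof (rule ccontr)
  assume nz: "emeasure M A \<noteq> 0"
  define F where "F = (\<lambda>v. ereal (lam/2 * (\<integral>t. (g t - v t)^2 \<partial>M)) + entropyS M v)"
  have u: "u \<in> L2 M" and umin: "\<And>v. v \<in> L2 M \<Longrightarrow> F u \<le> F v"
    using min unfolding is_minimizer_L2_def F_def by auto
  have um[measurable]: "u \<in> borel_measurable M" and gm[measurable]: "g \<in> borel_measurable M"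
    using u g unfolding L2_def by auto
  have one: "(\<lambda>_. 1) \<in> L2 M" unfolding L2_def
    using finite_measure.integrable_const[OF fin] by auto
  have "entropyS M (\<lambda>_. 1) = ereal 0" unfolding entropyS_def by simp
  hence "F (\<lambda>_. 1) < \<infinity>" unfolding F_def by simp
  hence Fu: "F u < \<infinity>" using umin[OF one] by auto
  have ent: "(AE t in M. 0 \<le> u t) \<and> integrable M (\<lambda>t. u t * ln (u t))"
  proof (rule ccontr)
    assume "\<not> ?thesis"
    hence "entropyS M u = \<infinity>" unfolding entropyS_def by auto
    hence "F u = \<infinity>" unfolding F_def by simp
    thus False using Fu by simp
  qed
  have Aint: "\<And>t. t \<in> A \<Longrightarrow> t \<in> space M" using A sets.sets_into_space by auto
  define v where "v = (\<lambda>t. u t + \<epsilon> * indicator A t)"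
  define Q where "Q = (\<lambda>t. (g t - u t)^2)"
  define c1 where "c1 = (\<lambda>t. (g t - (u t+\<epsilon>))^2 - (g t - u t)^2)"
  define c2 where "c2 = (\<lambda>t. (u t+\<epsilon>)*ln(u t+\<epsilon>) - u t*ln(u t))"
  define c0 where "c0 = (\<lambda>t. (u t+\<epsilon>)^2 - (u t)^2)"
  have e1: "\<And>t. (g t - v t)^2 = Q t + indicator A t * c1 t"
    by (simp add: v_def Q_def c1_def indicator_def)
  have e2: "\<And>t. v t * ln (v t) = u t * ln (u t) + indicator A t * c2 t"
    by (simp add: v_def c2_def indicator_def)
  have e0: "\<And>t. (v t)^2 = (u t)^2 + indicator A t * c0 t"
    by (simp add: v_def c0_def indicator_def)
  have c1m[measurable]: "c1 \<in> borel_measurable M" unfolding c1_def by measurable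
  have c2m[measurable]: "c2 \<in> borel_measurable M" unfolding c2_def by measurable
  have c0m[measurable]: "c0 \<in> borel_measurable M" unfolding c0_def by measurable
  have K0: "\<And>t. t \<in> A \<Longrightarrow> 0 \<le> K" using bnd by force
  have i1: "integrable M (\<lambda>t. indicator A t * c1 t)"
  proof (rule ind_int[OF fin A c1m, where C="(2*K+\<epsilon>)^2 + (2*K)^2"])
    fix t assume t: "t \<in> A"
    have "(g t - (u t+\<epsilon>))^2 \<le> (2*K+\<epsilon>)^2" using bnd[OF t] eps by (intro sq_le) auto
    moreover have "(g t - u t)^2 \<le> (2*K)^2" using bnd[OF t] by (intro sq_le) auto
    ultimately show "\<bar>c1 t\<bar> \<le> (2*K+\<epsilon>)^2 + (2*K)^2" unfolding c1_def
      using zero_le_power2[of "g t - (u t+\<epsilon>)"] zero_le_power2[of "g t - u t"] by linarith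
  qed
  have i2: "integrable M (\<lambda>t. indicator A t * c2 t)"
  proof (rule ind_int[OF fin A c2m, where C="(K+\<epsilon>)^2 + 1 + (K^2 + 1)"])
    fix t assume t: "t \<in> A"
    have "\<bar>(u t+\<epsilon>)*ln(u t+\<epsilon>)\<bar> \<le> (u t+\<epsilon>)^2 + 1" using bnd[OF t] eps by (intro xlnx_bound) auto
    moreover have "(u t+\<epsilon>)^2 \<le> (K+\<epsilon>)^2" using bnd[OF t] eps by (intro sq_le) auto
    moreover have "\<bar>u t*ln(u t)\<bar> \<le> (u t)^2 + 1" using bnd[OF t] by (intro xlnx_bound) auto
    moreover have "(u t)^2 \<le> K^2" using bnd[OF t] by (intro sq_le) auto
    ultimately show "\<bar>c2 t\<bar> \<le> (K+\<epsilon>)^2 + 1 + (K^2 + 1)" unfolding c2_def by linarith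
  qed
  have i0: "integrable M (\<lambda>t. indicator A t * c0 t)"
  proof (rule ind_int[OF fin A c0m, where C="(K+\<epsilon>)^2 + K^2"])
    fix t assume t: "t \<in> A"
    have "(u t+\<epsilon>)^2 \<le> (K+\<epsilon>)^2" using bnd[OF t] eps by (intro sq_le) auto
    moreover have "(u t)^2 \<le> K^2" using bnd[OF t] by (intro sq_le) auto
    ultimately show "\<bar>c0 t\<bar> \<le> (K+\<epsilon>)^2 + K^2" unfolding c0_def
      using zero_le_power2[of "u t+\<epsilon>"] zero_le_power2[of "u t"] by linarith
  qed
  have vm[measurable]: "v \<in> borel_measurable M" unfolding v_def using A by measurable
  have usq: "integrable M (\<lambda>t. (u t)^2)" using u unfolding L2_def by auto
  have "integrable M (\<lambda>t. (v t)^2)" unfolding e0 using usq i0 by (rule Bochner_Integration.integrable_add)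
  hence vL2: "v \<in> L2 M" unfolding L2_def using vm by auto
  have Qi: "integrable M Q" unfolding Q_def using L2_sq_diff[OF g u] .
  have q: "(\<integral>t. (g t - v t)^2 \<partial>M) = integral\<^sup>L M Q + (\<integral>t. indicator A t * c1 t \<partial>M)"
    unfolding e1 using Qi i1 by (rule Bochner_Integration.integral_add)
  have ulnu: "integrable M (\<lambda>t. u t * ln (u t))" using ent by auto
  have vlnv: "integrable M (\<lambda>t. v t * ln (v t))" unfolding e2 using ulnu i2 by (rule Bochner_Integration.integrable_add)
  have vpos: "AE t in M. 0 \<le> v t" using conjunct1[OF ent]
  proof (rule eventually_mono)
    fix t assume "0 \<le> u t" thus "0 \<le> v t" using eps by (simp add: v_def indicator_def)
  qed
  have ev: "entropyS M v = ereal ((\<integral>t. u t * ln (u t) \<partial>M) + (\<integral>t. indicator A t * c2 t \<partial>M))"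
    unfolding entropyS_def using vpos vlnv apply simp
    unfolding e2 using ulnu i2 by (rule Bochner_Integration.integral_add)
  have eu: "entropyS M u = ereal (\<integral>t. u t * ln (u t) \<partial>M)"
    unfolding entropyS_def using ent by simp
  define D where "D = (\<lambda>t. indicator A t * (lam/2 * c1 t + c2 t))"
  have eD: "D = (\<lambda>t. lam/2 * (indicator A t * c1 t) + indicator A t * c2 t)"
    unfolding D_def by (auto simp: algebra_simps)
  have iD: "integrable M D" unfolding eD using i1 i2 by auto
  have intD: "integral\<^sup>L M D = lam/2 * (\<integral>t. indicator A t * c1 t \<partial>M) + (\<integral>t. indicator A t * c2 t \<partial>M)"
    unfolding eD using i1 i2 by simp
  have Dneg: "D t < 0" if t: "t \<in> A" for t
  proof -
    have "D t = lam/2*((g t - (u t+\<epsilon>))^2 - (g t - u t)^2) + ((u t+\<epsilon>)*ln(u t+\<epsilon>) - u t*ln(u t))"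
      unfolding D_def c1_def c2_def using t by simp
    also have "\<dots> = (lam/2*(g t - (u t + \<epsilon>))^2 + (u t+\<epsilon>)*ln(u t+\<epsilon>)) - (lam/2*(g t - u t)^2 + u t * ln(u t))"
      by (simp only: right_diff_distrib) 
    finally show ?thesis using neg[OF t] by linarith
  qed
  have Dle: "0 \<le> - D t" for t
  proof (cases "t \<in> A")
    case True thus ?thesis using Dneg[OF True] by simp
  next
    case False thus ?thesis unfolding D_def by simp
  qed
  have "integral\<^sup>L M D < 0"
  proof -
    have i: "integrable M (\<lambda>t. - D t)" using iD by auto
    have ge: "0 \<le> (\<integral>t. - D t \<partial>M)" by (rule integral_nonneg_AE[OF AE_I2[OF Dle]])
    have "(\<integral>t. - D t \<partial>M) \<noteq> 0"
    proof
      assume z: "(\<integral>t. - D t \<partial>M) = 0"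
      have "AE t in M. - D t = 0" using integral_nonneg_eq_0_iff_AE[OF i AE_I2[OF Dle]] z by (rule iffD1)
      hence ae: "AE t in M. t \<notin> A"
      proof (rule eventually_mono)
        fix t assume h: "- D t = 0"
        show "t \<notin> A"
        proof
          assume "t \<in> A" from Dneg[OF this] h show False by simp
        qed
      qed
      have eq: "{x\<in>space M. \<not> (x \<notin> A)} = A" using Aint by auto
      have "emeasure M A = 0" using AE_iff_measurable[OF A eq] ae by (rule iffD1)
      thus False using nz by simp
    qed
    with ge have "0 < (\<integral>t. - D t \<partial>M)" by linarith
    thus ?thesis by simp
  qed
  hence Dn: "integral\<^sup>L M D < 0" .
  have "F v = ereal (lam/2 * (integral\<^sup>L M Q + (\<integral>t. indicator A t * c1 t \<partial>M)) + ((\<integral>t. u t * ln (u t) \<partial>M) + (\<integral>t. indicator A t * c2 t \<partial>M)))"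
    unfolding F_def q ev by simp
  also have "\<dots> = ereal (lam/2 * integral\<^sup>L M Q + (\<integral>t. u t * ln (u t) \<partial>M) + integral\<^sup>L M D)"
    unfolding intD by (simp add: algebra_simps)
  also have "\<dots> < ereal (lam/2 * integral\<^sup>L M Q + (\<integral>t. u t * ln (u t) \<partial>M))"
    using Dn by simp
  also have "\<dots> = F u" unfolding F_def eu Q_def by simp
  finally have "F v < F u" .
  thus False using umin[OF vL2] by simp
qed



lemma min_nonneg:
  fixes M :: "'a measure" and g u :: "'a \<Rightarrow> real"
  assumes fin: "finite_measure M"
  and min: "is_minimizer_L2 M (\<lambda>v. ereal (lam/2 * (\<integral>t. (g t - v t)^2 \<partial>M)) + entropyS M v) u"
  shows "AE t in M. 0 \<le> u t"
proof (rule ccontr)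
  assume na: "\<not> (AE t in M. 0 \<le> u t)"
  define F where "F = (\<lambda>v. ereal (lam/2 * (\<integral>t. (g t - v t)^2 \<partial>M)) + entropyS M v)"
  have umin: "\<And>v. v \<in> L2 M \<Longrightarrow> F u \<le> F v"
    using min unfolding is_minimizer_L2_def F_def by auto
  have one: "(\<lambda>_. 1) \<in> L2 M" unfolding L2_def
    using finite_measure.integrable_const[OF fin] by auto
  have "entropyS M (\<lambda>_. 1) = ereal 0" unfolding entropyS_def by simp
  hence "F (\<lambda>_. 1) < \<infinity>" unfolding F_def by simp
  hence Fu: "F u < \<infinity>" using umin[OF one] by auto
  have "entropyS M u = \<infinity>" unfolding entropyS_def using na by auto
  hence "F u = \<infinity>" unfolding F_def by simp
  thus False using Fu by simp
qed

lemma min_pos: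
  fixes M :: "'a measure" and g u :: "'a \<Rightarrow> real"
  assumes fin: "finite_measure M" and lam: "0 < lam" and g: "g \<in> L2 M"
  and min: "is_minimizer_L2 M (\<lambda>v. ereal (lam/2 * (\<integral>t. (g t - v t)^2 \<partial>M)) + entropyS M v) u"
  shows "AE t in M. 0 < u t"
proof -
  have u: "u \<in> L2 M" using min unfolding is_minimizer_L2_def by auto
  have um[measurable]: "u \<in> borel_measurable M" and gm[measurable]: "g \<in> borel_measurable M"
    using u g unfolding L2_def by auto
  define A where "A = (\<lambda>k::nat. {t \<in> space M. u t = 0 \<and> \<bar>g t\<bar> \<le> real k})"
  have "emeasure M (A k) = 0" for k
  proof -
    define e where "e = exp (- (lam * real k) - lam)"
    have e0: "0 < e" unfolding e_def by simp
    have "0 \<le> lam * real k" using lam by simp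
    hence "- (lam * real k) - lam \<le> 0" using lam by linarith
    hence e1: "e \<le> 1" unfolding e_def by simp
    have le: "ln e = - (lam * real k) - lam" unfolding e_def by simp
    have As: "A k \<in> sets M" unfolding A_def by measurable
    show ?thesis
    proof (rule perturb[OF fin lam g min As e0, where K="real k"])
      fix t assume t: "t \<in> A k"
      hence u0: "u t = 0" and gk: "\<bar>g t\<bar> \<le> real k" unfolding A_def by auto
      show "0 \<le> u t \<and> u t \<le> real k \<and> \<bar>g t\<bar> \<le> real k" using u0 gk by simp
      have h1: "- g t + e/2 - real k - 1 < 0" using gk e1 by linarith
      have h: "lam * e * (- g t + e/2 - real k - 1) < 0"
        using h1 lam e0 by (simp add: mult_pos_neg)
      have id: "lam/2*(g t - e)^2 + e*(- (lam * real k) - lam) - lam/2*(g t)^2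
          = lam * e * (- g t + e/2 - real k - 1)"
        by (simp add: power2_eq_square algebra_simps)
      show "lam/2*(g t - (u t + e))^2 + (u t+e)*ln(u t+e) < lam/2*(g t - u t)^2 + u t * ln(u t)"
        using u0 le id h by simp
    qed
  qed
  hence "AE t in M. \<forall>k. t \<notin> A k"
    by (subst AE_all_countable) (intro allI AE_not_in, simp add: null_sets_def A_def)
  moreover have "AE t in M. 0 \<le> u t" by (rule min_nonneg[OF fin min])
  moreover have "AE t in M. t \<in> space M" by (rule AE_space)
  ultimately show ?thesis
  proof (eventually_elim)
    case (elim t)
    show "0 < u t"
    proof (rule ccontr)
      assume "\<not> 0 < u t"
      hence u0: "u t = 0" using elim by simp
      have "\<bar>g t\<bar> \<le> real (nat \<lceil>\<bar>g t\<bar>\<rceil>)" by (rule real_nat_ceiling_ge)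
      hence "t \<in> A (nat \<lceil>\<bar>g t\<bar>\<rceil>)" unfolding A_def using u0 elim by auto
      thus False using elim by blast
    qed
  qed
qed

lemma xlnx_conv:
  assumes a: "0 \<le> (a::real)" and b: "0 < b"
  shows "b*ln b - a*ln a \<le> (b - a)*(ln b + 1)"
proof (cases "a = 0")
  case True thus ?thesis using b by (simp add: algebra_simps)
next
  case False
  hence a0: "0 < a" using a by simp
  have "ln (b/a) \<le> b/a - 1" using ln_le_minus_one a0 b by simp
  hence "ln b - ln a \<le> b/a - 1" using a0 b by (simp add: ln_div)
  hence "a * (ln b - ln a) \<le> a * (b/a - 1)" using a0 by (intro mult_left_mono) auto
  hence "a * ln b - a * ln a \<le> b - a" using a0 by (simp add: algebra_simps)
  thus ?thesis by (simp add: algebra_simps)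
qed

lemma min_above:
  fixes M :: "'a measure" and g u :: "'a \<Rightarrow> real"
  assumes fin: "finite_measure M" and lam: "0 < lam" and g: "g \<in> L2 M"
  and min: "is_minimizer_L2 M (\<lambda>v. ereal (lam/2 * (\<integral>t. (g t - v t)^2 \<partial>M)) + entropyS M v) u"
  and E: "E \<in> sets M" and gE: "\<And>t. t \<in> E \<Longrightarrow> 0 \<le> g t \<and> g t < exp (-1)"
  shows "AE t in M. t \<in> E \<longrightarrow> g t < u t"
proof -
  have u: "u \<in> L2 M" using min unfolding is_minimizer_L2_def by auto
  have um[measurable]: "u \<in> borel_measurable M" and gm[measurable]: "g \<in> borel_measurable M"
    using u g unfolding L2_def by auto
  have Em[measurable]: "E \<in> sets M" by (rule E)
  define C where "C = (\<lambda>k::nat. {t \<in> space M. t \<in> E \<and> 0 \<le> u t \<and> u t \<le> g t \<and> g t \<le> exp (-1) - 2*(exp (-1)/(real k + 2))})"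
  have Cs: "C k \<in> sets M" for k unfolding C_def by measurable
  have "emeasure M (C k) = 0" for k
  proof -
    define d where "d = exp (-1) / (real k + 2)"
    have d0: "0 < d" unfolding d_def by simp
    have "d \<le> exp (-1) / 2" unfolding d_def by (intro divide_left_mono) auto
    hence dl: "0 < exp (-1) - d" using d0 by simp
    define c where "c = -1 - ln (exp (-1) - d)"
    have "ln (exp (-1) - d) < ln (exp (-1))" using dl d0 by (subst ln_less_cancel_iff) auto
    hence c0: "0 < c" unfolding c_def by simp
    define e where "e = min d (c/lam)"
    have e0: "0 < e" unfolding e_def using d0 c0 lam by simp
    have ed: "e \<le> d" and ec: "lam * e \<le> c" unfolding e_def using lam
      by (auto simp: min_def field_simps)
    have ex1: "exp (-1::real) \<le> 1" by simp
    show ?thesis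
    proof (rule perturb[OF fin lam g min Cs[of k] e0, where K=1])
      fix t assume t: "t \<in> C k"
      hence tE: "t \<in> E" and u0: "0 \<le> u t" and ug: "u t \<le> g t"
        and gb: "g t \<le> exp (-1) - 2*d" unfolding C_def d_def by auto
      have g0: "0 \<le> g t" using gE[OF tE] by simp
      have g1: "g t \<le> 1" using gb d0 ex1 by linarith
      show "0 \<le> u t \<and> u t \<le> 1 \<and> \<bar>g t\<bar> \<le> 1" using u0 ug g1 g0 by auto
      define a where "a = u t"
      define b where "b = u t + e"
      have b0: "0 < b" unfolding b_def using u0 e0 by simp
      have bl: "b \<le> exp (-1) - d" unfolding b_def using ug gb ed by linarith
      have "ln b \<le> ln (exp (-1) - d)" using b0 bl by simp
      hence lnb: "ln b + 1 \<le> - c" unfolding c_def by simp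
      have conv: "b*ln b - a*ln a \<le> e*(ln b + 1)"
        using xlnx_conv[OF u0 b0] unfolding a_def b_def by simp
      have "e*(ln b + 1) \<le> e*(-c)" using lnb e0 by (intro mult_left_mono) auto
      hence ent: "b*ln b - a*ln a \<le> - (e*c)" using conv by simp
      have qid: "lam/2*(g t - b)^2 - lam/2*(g t - a)^2 = lam*e*e/2 - lam*e*(g t - a)"
        unfolding a_def b_def by (simp add: power2_eq_square algebra_simps)
      have "0 \<le> lam*e*(g t - a)" using lam e0 ug unfolding a_def by simp
      moreover have "lam*e*e \<le> c*e" using ec e0 by (intro mult_right_mono) auto
      ultimately have q: "lam/2*(g t - b)^2 - lam/2*(g t - a)^2 \<le> c*e/2" using qid by linarith
      have "0 < c*e" using c0 e0 by simp
      hence "lam/2*(g t - b)^2 + b*ln b < lam/2*(g t - a)^2 + a*ln a"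
        using q ent by (simp add: algebra_simps)
      thus "lam/2*(g t - (u t + e))^2 + (u t+e)*ln(u t+e) < lam/2*(g t - u t)^2 + u t * ln(u t)"
        unfolding a_def b_def by simp
    qed
  qed
  hence "C k \<in> null_sets M" for k using Cs by auto
  hence "AE t in M. \<forall>k. t \<notin> C k"
    by (subst AE_all_countable) (intro allI AE_not_in)
  moreover have "AE t in M. 0 \<le> u t" by (rule min_nonneg[OF fin min])
  moreover have "AE t in M. t \<in> space M" by (rule AE_space)
  ultimately show ?thesis
  proof (eventually_elim)
    case (elim t)
    show "t \<in> E \<longrightarrow> g t < u t"
    proof (rule impI, rule ccontr)
      assume tE: "t \<in> E" and "\<not> g t < u t"
      hence ug: "u t \<le> g t" by simp
      have gl: "g t < exp (-1)" using gE[OF tE] by simp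
      obtain k :: nat where k: "2 * exp (-1) / (exp (-1) - g t) \<le> real k" using real_arch_simple by blast
      have pos: "0 < exp (-1) - g t" using gl by simp
      have "2 * exp (-1) \<le> real k * (exp (-1) - g t)" using k pos by (simp add: pos_divide_le_eq)
      also have "\<dots> \<le> (real k + 2) * (exp (-1) - g t)" using pos by (intro mult_right_mono) auto
      finally have "2 * (exp (-1) / (real k + 2)) \<le> exp (-1) - g t"
        by (simp add: pos_divide_le_eq mult.commute)
      hence "t \<in> C k" unfolding C_def using elim tE ug by auto
      thus False using elim by blast
    qed
  qed
qed



theorem mainTheorem5:
  fixes \<Omega> E :: "'a::euclidean_space set"
    and lam :: "nat \<Rightarrow> real"
    and xdag :: "'a \<Rightarrow> real"
    and x :: "nat \<Rightarrow> 'a \<Rightarrow> real"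
  assumes "bounded \<Omega>" and "\<Omega> \<in> sets lebesgue"
    and "\<And>n. 0 < lam n" and "mono lam"
    and "xdag \<in> L2 (lebesgue_on \<Omega>)"
    and "E \<subseteq> \<Omega>" and "E \<in> sets lebesgue" and "emeasure lebesgue E > 0"
    and "\<And>t. t \<in> E \<Longrightarrow> 0 \<le> xdag t \<and> xdag t < exp (-1)"
    and "MHDM_iterates (lebesgue_on \<Omega>) lam xdag x"
  shows "AE t in lebesgue_on \<Omega>. t \<in> E \<longrightarrow>
           xdag t < x 0 t \<and> (\<forall>n. x n t < x (Suc n) t)"
proof -
  let ?M = "lebesgue_on \<Omega>"
  have fin: "finite_measure ?M"
    by (rule finite_measure_lebesgue_on[OF bounded_set_imp_lmeasurable[OF assms(1,2)]])
  have fd: "xdag \<in> L2 ?M" by (rule assms(5))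
  have m0': "is_minimizer_L2 ?M (\<lambda>u. ereal (lam 0 / 2 * (\<integral>t. (u t - xdag t)\<^sup>2 \<partial>?M)) + entropyS ?M u) (x 0)"
    and ms: "\<And>n. is_minimizer_L2 ?M
       (\<lambda>u. ereal (lam (Suc n) / 2 * (\<integral>t. (xdag t - x n t - u t)\<^sup>2 \<partial>?M)) + entropyS ?M u)
       (\<lambda>t. x (Suc n) t - x n t)"
    using assms(10) unfolding MHDM_iterates_def by auto
  have feq: "(\<lambda>u. ereal (lam 0 / 2 * (\<integral>t. (u t - xdag t)\<^sup>2 \<partial>?M)) + entropyS ?M u)
      = (\<lambda>u. ereal (lam 0 / 2 * (\<integral>t. (xdag t - u t)\<^sup>2 \<partial>?M)) + entropyS ?M u)"
    by (simp add: power2_commute)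
  have m0: "is_minimizer_L2 ?M (\<lambda>u. ereal (lam 0 / 2 * (\<integral>t. (xdag t - u t)\<^sup>2 \<partial>?M)) + entropyS ?M u) (x 0)"
    using m0' feq by simp
  have xL2: "x n \<in> L2 ?M" for n
  proof (induction n)
    case 0 thus ?case using m0 unfolding is_minimizer_L2_def by auto
  next
    case (Suc n)
    have "(\<lambda>t. x (Suc n) t - x n t) \<in> L2 ?M" using ms[of n] unfolding is_minimizer_L2_def by auto
    from L2_add[OF Suc this] show ?case by simp
  qed
  have EM: "E \<in> sets ?M" using assms(2,6,7) by (subst sets_restrict_space_iff) auto
  have above: "AE t in ?M. t \<in> E \<longrightarrow> xdag t < x 0 t"
    by (rule min_above[OF fin assms(3) fd m0 EM assms(9)])
  have "AE t in ?M. 0 < x (Suc n) t - x n t" for n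
    using min_pos[OF fin assms(3) L2_diff[OF fd xL2[of n]] ms[of n]] by simp
  hence "AE t in ?M. \<forall>n. 0 < x (Suc n) t - x n t" by (subst AE_all_countable) auto
  with above show ?thesis by eventually_elim auto
qed

end
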